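(* In the setting of the context, the linear forms $Q^{(l)}$ and $\bar Q^{(l)}$ satisfy, for $l\ge1$, $$Q^{(l)}=\xi_1^{(l)}-(g_{l,0},\dots,g_{l,l-1})(g^{[l]})^{-1}\xi_1^{[l]}=\bar S_{l,l}\,(0,\dots,0,1)(g^{[l+1]})^{-1}\xi_1^{[l+1]}=\frac{1}{\det g^{[l]}}\det\begin{pmatrix}g_{0,0}&\cdots&g_{0,l-1}&\xi_1^{(0)}\\ \vdots&&\vdots&\vdots\\ g_{l,0}&\cdots&g_{l,l-1}&\xi_1^{(l)}\end{pmatrix},$$ and, for $l\ge0$, $$\bar Q^{(l)}=(\bar S_{l,l})^{-1}\Big(\xi_2^{(l)}-(\xi_2^{[l]})^\top(g^{[l]})^{-1}\begin{pmatrix}g_{0,l}\\ \vdots\\ g_{l-1,l}\end{pmatrix}\Big)=(\xi_2^{[l+1]})^\top(g^{[l+1]})^{-1}\begin{pmatrix}0\\ \vdots\\0\\1\end{pmatrix}=\frac{1}{\det g^{[l+1]}}\det\begin{pmatrix}g_{0,0}&\cdots&g_{0,l}\\ \vdots&&\vdots\\ g_{l-1,0}&\cdots&g_{l-1,l}\\ \xi_2^{(0)}&\cdots&\xi_2^{(l)}\end{pmatrix}.$$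
   Context: $\mu$ is a finite Borel measure on an interval $\Delta\subset\mathbb R$ with infinitely many support points, not changing sign; $w_{1,a}$ ($a=1,\dots,p_1$), $w_{2,b}$ ($b=1,\dots,p_2$) are real integrable functions on $\Delta$ not changing sign; compositions $\vec n_\ell\in\mathbb N^{p_\ell}$ fixed. Each $i\in\mathbb Z_+$ is uniquely $i=q|\vec n_\ell|+n_{\ell,1}+\dots+n_{\ell,a-1}+r$, $0\le r<n_{\ell,a}$; $a_\ell(i)=a$, $k_\ell(i)=qn_{\ell,a}+r$. $\xi_\ell(x)$ is the semi-infinite vector with $i$-th entry $\xi_\ell^{(i)}=w_{\ell,a_\ell(i)}(x)x^{k_\ell(i)}$, and $\xi_\ell^{[l]}$ is the vector of its first $l$ entries. $g=\int\xi_1\xi_2^\top d\mu$, $g^{[l]}=(g_{i,j})_{0\le i,j<l}$. The combination is assumed perfect (for all $\vec\nu_1,\vec\nu_2$ with $|\vec\nu_1|=|\vec\nu_2|+1$, nontrivial polynomials $A_a$, $\deg A_a\le\nu_{1,a}-1$, with $\int\sum_aA_aw_{1,a}w_{2,b}x^jd\mu=0$ for $j<\nu_{2,b}$, all $b$, have $\deg A_a=\nu_{1,a}-1$), so that all $\det g^{[l]}\ne0$ and $g=S^{-1}\bar S$ with $S$ unit lower triangular and $\bar S$ upper triangular invertible. $Q=S\xi_1$, $\bar Q=(\bar S^{-1})^\top\xi_2$. *)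

theory Defs
  imports "HOL-Analysis.Analysis" "HOL-Computational_Algebra.Polynomial"
          "Jordan_Normal_Form.Determinant"
begin

(* Compositions are lists of positive naturals; components are indexed 0..p-1
   (the paper's a = 1..p corresponds to a = 0..p-1 here). *)

definition composition :: "nat list \<Rightarrow> bool" where
  "composition ns \<longleftrightarrow> ns \<noteq> [] \<and> (\<forall>a<length ns. ns ! a > 0)"

(* i = q |n| + n_0 + ... + n_{a-1} + r, 0 \<le> r < n_a *)
definition comp_a :: "nat list \<Rightarrow> nat \<Rightarrow> nat" where
  "comp_a ns i = (LEAST a. i mod sum_list ns < sum_list (take (Suc a) ns))"

definition comp_k :: "nat list \<Rightarrow> nat \<Rightarrow> nat" where
  "comp_k ns i = (i div sum_list ns) * (ns ! comp_a ns i)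
                 + (i mod sum_list ns - sum_list (take (comp_a ns i) ns))"

definition xi :: "nat list \<Rightarrow> (nat \<Rightarrow> real \<Rightarrow> real) \<Rightarrow> nat \<Rightarrow> real \<Rightarrow> real" where
  "xi ns w i x = w (comp_a ns i) x * x ^ comp_k ns i"

abbreviation mv :: "real mat \<Rightarrow> real Matrix.vec \<Rightarrow> real Matrix.vec" where
  "mv A v \<equiv> Matrix.mult_mat_vec A v"

abbreviation sp :: "real Matrix.vec \<Rightarrow> real Matrix.vec \<Rightarrow> real" where
  "sp u v \<equiv> Matrix.scalar_prod u v"

definition msupport :: "real measure \<Rightarrow> real set" where
  "msupport M = {x. \<forall>e>0. emeasure M (ball x e) > 0}"

definition minv :: "real mat \<Rightarrow> real mat" where
  "minv A = (THE B. B \<in> carrier_mat (dim_row A) (dim_row A) \<and>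
                    A * B = 1\<^sub>m (dim_row A) \<and> B * A = 1\<^sub>m (dim_row A))"

definition trunc :: "(nat \<Rightarrow> nat \<Rightarrow> real) \<Rightarrow> nat \<Rightarrow> real mat" where
  "trunc g l = mat l l (\<lambda>(i,j). g i j)"

(* perfect combination (mu-dependent part; sign of mu irrelevant) *)
definition perfect :: "real measure \<Rightarrow> nat \<Rightarrow> (nat \<Rightarrow> real \<Rightarrow> real) \<Rightarrow> nat \<Rightarrow> (nat \<Rightarrow> real \<Rightarrow> real) \<Rightarrow> bool" where
  "perfect M p1 w1 p2 w2 \<longleftrightarrow>
    (\<forall>(\<nu>1::nat \<Rightarrow> nat) (\<nu>2::nat \<Rightarrow> nat) (A::nat \<Rightarrow> real poly).
       (\<Sum>a<p1. \<nu>1 a) = (\<Sum>b<p2. \<nu>2 b) + 1 \<longrightarrow>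
       (\<forall>a<p1. \<forall>i\<ge>\<nu>1 a. coeff (A a) i = 0) \<longrightarrow>
       (\<exists>a<p1. A a \<noteq> 0) \<longrightarrow>
       (\<forall>b<p2. \<forall>j<\<nu>2 b.
          (\<integral>x. (\<Sum>a<p1. poly (A a) x * w1 a x) * w2 b x * x ^ j \<partial>M) = 0) \<longrightarrow>
       (\<forall>a<p1. \<nu>1 a \<ge> 1 \<longrightarrow> coeff (A a) (\<nu>1 a - 1) \<noteq> 0))"

end

theory Submission
  imports Defs
begin

lemma sum_trunc:
  fixes f :: "nat \<Rightarrow> real"
  assumes "i < n" "\<And>k. i < k \<Longrightarrow> f k = 0"
  shows "(\<Sum>k\<in>{0..<n}. f k) = (\<Sum>k\<le>i. f k)"
  by (rule sum.mono_neutral_right) (use assms in auto)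

lemma minv_eq:
  assumes A: "A \<in> carrier_mat n n" and B: "B \<in> carrier_mat n n"
    and AB: "A * B = 1\<^sub>m n" and BA: "B * A = 1\<^sub>m n"
  shows "minv A = B"
  unfolding minv_def
proof (rule the_equality)
  show "B \<in> carrier_mat (dim_row A) (dim_row A) \<and> A * B = 1\<^sub>m (dim_row A) \<and> B * A = 1\<^sub>m (dim_row A)"
    using A B AB BA by auto
next
  fix C assume C: "C \<in> carrier_mat (dim_row A) (dim_row A) \<and> A * C = 1\<^sub>m (dim_row A) \<and> C * A = 1\<^sub>m (dim_row A)"
  hence C': "C \<in> carrier_mat n n" "A * C = 1\<^sub>m n" "C * A = 1\<^sub>m n" using A by auto
  have "C = C * (A * B)" using C' AB by simp
  also have "\<dots> = (C * A) * B" using assoc_mult_mat[OF C'(1) A B] by simp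
  also have "\<dots> = B" using C' B by simp
  finally show "C = B" .
qed

lemma prod_list_ones: "prod_list (map (\<lambda>_. 1::real) xs) = 1"
  by (induct xs) auto

theorem proposition2p7:
  fixes M :: "real measure" and \<sigma> :: real and \<Delta> :: "real set"
    and n1 n2 :: "nat list"
    and w1 w2 :: "nat \<Rightarrow> real \<Rightarrow> real"
    and g S Sb Sbinv :: "nat \<Rightarrow> nat \<Rightarrow> real"
    and Q Qb :: "nat \<Rightarrow> real \<Rightarrow> real"
  assumes interval: "is_interval \<Delta>"
    and M_borel: "sets M = sets borel"
    and M_finite: "finite_measure M"
    and M_on_\<Delta>: "emeasure M (UNIV - \<Delta>) = 0"
    and M_supp: "infinite (msupport M)"
    and sign: "\<sigma> = 1 \<or> \<sigma> = -1"
    and comp1: "composition n1" and comp2: "composition n2"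
    and w1_int: "\<And>a. a < length n1 \<Longrightarrow> integrable M (w1 a)"
    and w2_int: "\<And>b. b < length n2 \<Longrightarrow> integrable M (w2 b)"
    and w1_sign: "\<And>a. a < length n1 \<Longrightarrow>
                    (\<forall>x\<in>\<Delta>. w1 a x \<ge> 0) \<or> (\<forall>x\<in>\<Delta>. w1 a x \<le> 0)"
    and w2_sign: "\<And>b. b < length n2 \<Longrightarrow>
                    (\<forall>x\<in>\<Delta>. w2 b x \<ge> 0) \<or> (\<forall>x\<in>\<Delta>. w2 b x \<le> 0)"
    and perfect: "perfect M (length n1) w1 (length n2) w2"
    and g_def: "\<And>i j. g i j = \<sigma> * (\<integral>x. xi n1 w1 i x * xi n2 w2 j x \<partial>M)"
    and S_unit: "\<And>i. S i i = 1"
    and S_lower: "\<And>i j. i < j \<Longrightarrow> S i j = 0"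
    and Sb_upper: "\<And>i j. j < i \<Longrightarrow> Sb i j = 0"
    and Sb_diag: "\<And>i. Sb i i \<noteq> 0"
    and LU: "\<And>i j. (\<Sum>k\<le>i. S i k * g k j) = Sb i j"
    and Sbinv_upper: "\<And>i j. j < i \<Longrightarrow> Sbinv i j = 0"
    and Sbinv_right: "\<And>i j. (\<Sum>k\<le>j. Sb i k * Sbinv k j) = (if i = j then 1 else 0)"
    and Sbinv_left: "\<And>i j. (\<Sum>k\<le>j. Sbinv i k * Sb k j) = (if i = j then 1 else 0)"
    and Q_def: "\<And>l x. Q l x = (\<Sum>k\<le>l. S l k * xi n1 w1 k x)"
    and Qb_def: "\<And>l x. Qb l x = (\<Sum>k\<le>l. Sbinv k l * xi n2 w2 k x)"
  shows "(\<forall>l\<ge>1. \<forall>x.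
            Q l x = xi n1 w1 l x
                    - sp (Matrix.vec l (\<lambda>j. g l j)) (mv (minv (trunc g l)) (Matrix.vec l (\<lambda>i. xi n1 w1 i x)))
          \<and> Q l x = Sb l l * sp (unit_vec (l+1) l)
                    (mv (minv (trunc g (l+1))) (Matrix.vec (l+1) (\<lambda>i. xi n1 w1 i x)))
          \<and> Q l x = det (mat (l+1) (l+1) (\<lambda>(i,j). if j < l then g i j else xi n1 w1 i x))
                    / det (trunc g l))
       \<and> (\<forall>l. \<forall>x.
            Qb l x = inverse (Sb l l) * (xi n2 w2 l x
                    - sp (Matrix.vec l (\<lambda>i. xi n2 w2 i x)) (mv (minv (trunc g l)) (Matrix.vec l (\<lambda>i. g i l))))
          \<and> Qb l x = sp (Matrix.vec (l+1) (\<lambda>i. xi n2 w2 i x))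
                    (mv (minv (trunc g (l+1))) (unit_vec (l+1) l))
          \<and> Qb l x = det (mat (l+1) (l+1) (\<lambda>(i,j). if i < l then g i j else xi n2 w2 j x))
                    / det (trunc g (l+1)))"
proof -
  define L where "L = (\<lambda>n. mat n n (\<lambda>(i,j). S i j))"
  define U where "U = (\<lambda>n. mat n n (\<lambda>(i,j). Sb i j))"
  define V where "V = (\<lambda>n. mat n n (\<lambda>(i,j). Sbinv i j))"
  define G where "G = (\<lambda>n. trunc g n)"
  have cL: "\<And>n. L n \<in> carrier_mat n n" and cU: "\<And>n. U n \<in> carrier_mat n n"
   and cV: "\<And>n. V n \<in> carrier_mat n n" and cG: "\<And>n. G n \<in> carrier_mat n n"
    by (auto simp: L_def U_def V_def G_def trunc_def)
  have LGe: "(\<Sum>k\<in>{0..<n}. S i k * g k j) = Sb i j" if "i < n" for i j n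
    using sum_trunc[OF that, of "\<lambda>k. S i k * g k j"] LU[of i j] S_lower by auto
  have UVe: "(\<Sum>k\<in>{0..<n}. Sb i k * Sbinv k j) = (if i = j then 1 else 0)" if "j < n" for i j n
    using sum_trunc[OF that, of "\<lambda>k. Sb i k * Sbinv k j"] Sbinv_right[of i j] Sbinv_upper by auto
  have VUe: "(\<Sum>k\<in>{0..<n}. Sbinv i k * Sb k j) = (if i = j then 1 else 0)" if "j < n" for i j n
    using sum_trunc[OF that, of "\<lambda>k. Sbinv i k * Sb k j"] Sbinv_left[of i j] Sb_upper by auto
  have LG: "L n * G n = U n" for n
    by (rule eq_matI) (auto simp: L_def U_def G_def trunc_def scalar_prod_def LGe)
  have UV: "U n * V n = 1\<^sub>m n" for n
    by (rule eq_matI) (auto simp: V_def U_def scalar_prod_def UVe)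
  have VU: "V n * U n = 1\<^sub>m n" for n
    by (rule eq_matI) (auto simp: V_def U_def scalar_prod_def VUe)
  have detL: "det (L n) = 1" for n
  proof -
    have "det (L n) = prod_list (diag_mat (L n))"
      by (rule det_lower_triangular[OF _ cL]) (auto simp: L_def S_lower)
    also have "diag_mat (L n) = map (\<lambda>_. 1) [0..<n]"
      by (auto simp: diag_mat_def L_def S_unit)
    moreover have "prod_list (map (\<lambda>_. 1::real) xs) = 1" for xs :: "nat list" by (induct xs) auto
    ultimately show ?thesis by simp
  qed
  have detU: "det (U n) \<noteq> 0" for n
  proof -
    have "det (U n) = prod_list (diag_mat (U n))"
      by (rule det_upper_triangular[OF _ cU]) (auto simp: U_def Sb_upper upper_triangular_def)
    also have "\<dots> \<noteq> 0" by (auto simp: diag_mat_def U_def Sb_diag prod_list_zero_iff)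
    finally show ?thesis .
  qed
  have detG: "det (G n) = det (U n)" for n
    using det_mult[OF cL cG, of n] LG detL by simp
  have GVL: "G n * (V n * L n) = 1\<^sub>m n" for n
  proof -
    have "L n * (G n * V n) = 1\<^sub>m n"
      using LG UV cL cG cV by (metis assoc_mult_mat)
    hence "(G n * V n) * L n = 1\<^sub>m n"
      by (rule mat_mult_left_right_inverse[OF cL mult_carrier_mat[OF cG cV]])
    thus ?thesis using cL cG cV by (metis assoc_mult_mat)
  qed
  have VLG: "(V n * L n) * G n = 1\<^sub>m n" for n
    using LG VU cL cG cV by (metis assoc_mult_mat)
  have Ginv: "minv (trunc g n) = V n * L n" for n
    using minv_eq[OF cG mult_carrier_mat[OF cV cL] GVL VLG] by (simp add: G_def)
  have SbSbinv: "Sb l l * Sbinv l l = 1" for l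
  proof -
    have "(\<Sum>k<Suc l. Sb l k * Sbinv k l) = 1" using Sbinv_right[of l l] by (simp add: lessThan_Suc_atMost)
    thus ?thesis by (simp add: Sb_upper)
  qed
  have LXe: "(\<Sum>k\<in>{0..<n}. S i k * xi n1 w1 k x) = Q i x" if "i < n" for i n x
    using sum_trunc[OF that, of "\<lambda>k. S i k * xi n1 w1 k x"] Q_def[of i x] S_lower by auto
  have Lx: "mv (L n) (Matrix.vec n (\<lambda>i. xi n1 w1 i x)) = Matrix.vec n (\<lambda>i. Q i x)" for n x
    by (rule eq_vecI) (auto simp: L_def scalar_prod_def LXe)
  have Q2: "Q l x = Sb l l * sp (unit_vec (l+1) l) (mv (minv (trunc g (l+1))) (Matrix.vec (l+1) (\<lambda>i. xi n1 w1 i x)))" for l x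
  proof -
    let ?n = "l+1"
    have e1: "mv (minv (trunc g ?n)) (Matrix.vec ?n (\<lambda>i. xi n1 w1 i x)) = mv (V ?n) (Matrix.vec ?n (\<lambda>i. Q i x))"
      using Ginv assoc_mult_mat_vec[OF cV cL, of "Matrix.vec ?n (\<lambda>i. xi n1 w1 i x)"] Lx by simp
    have cv: "mv (V ?n) (Matrix.vec ?n (\<lambda>i. Q i x)) \<in> carrier_vec ?n" by (rule mult_mat_vec_carrier[OF cV]) simp
    have "(mv (V ?n) (Matrix.vec ?n (\<lambda>i. Q i x))) $ l = (\<Sum>k\<in>{0..<Suc l}. Sbinv l k * Q k x)"
      by (simp add: V_def scalar_prod_def)
    also have "(\<Sum>k\<in>{0..<Suc l}. Sbinv l k * Q k x) = Sbinv l l * Q l x"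
      by (simp add: Sbinv_upper)
    finally have e2: "(mv (V ?n) (Matrix.vec ?n (\<lambda>i. Q i x))) $ l = Sbinv l l * Q l x" .
    have "sp (unit_vec (l+1) l) (mv (minv (trunc g (l+1))) (Matrix.vec (l+1) (\<lambda>i. xi n1 w1 i x))) = Sbinv l l * Q l x"
      unfolding e1 using scalar_prod_left_unit[OF cv, of l] e2 by simp
    thus ?thesis using SbSbinv[of l] by (simp add: algebra_simps)
  qed
  have cGinv: "minv (trunc g n) \<in> carrier_mat n n" for n
    unfolding Ginv by (rule mult_carrier_mat[OF cV cL])
  have GGinv: "mv (G n) (mv (minv (trunc g n)) v) = v" if "v \<in> carrier_vec n" for n v
    using that Ginv GVL[of n] assoc_mult_mat_vec[OF cG mult_carrier_mat[OF cV cL] that] by simp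
  have GinvG: "mv (minv (trunc g n)) (mv (G n) v) = v" if "v \<in> carrier_vec n" for n v
    using that Ginv VLG[of n] assoc_mult_mat_vec[OF mult_carrier_mat[OF cV cL] cG that] by simp
  have growe: "g l j = - (\<Sum>k\<in>{0..<l}. S l k * g k j)" if "j < l" for l j
  proof -
    have "(\<Sum>k<Suc l. S l k * g k j) = 0" using LU[of l j] Sb_upper[OF that] by (simp add: lessThan_Suc_atMost)
    thus ?thesis by (simp add: S_unit atLeast0LessThan)
  qed
  have Q1: "Q l x = xi n1 w1 l x - sp (Matrix.vec l (\<lambda>j. g l j)) (mv (minv (trunc g l)) (Matrix.vec l (\<lambda>i. xi n1 w1 i x)))" for l x
  proof -
    let ?s = "Matrix.vec l (\<lambda>k. - S l k)"
    let ?xv = "Matrix.vec l (\<lambda>i. xi n1 w1 i x)"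
    have grow: "Matrix.vec l (\<lambda>j. g l j) = mv (transpose_mat (G l)) ?s"
      by (rule eq_vecI) (auto simp: G_def trunc_def scalar_prod_def growe sum_negf mult.commute)
    have "sp (Matrix.vec l (\<lambda>j. g l j)) (mv (minv (trunc g l)) ?xv) = sp ?s (mv (G l) (mv (minv (trunc g l)) ?xv))"
      unfolding grow
      by (rule transpose_vec_mult_scalar[OF cG]) (auto intro: mult_mat_vec_carrier[OF cGinv])
    also have "\<dots> = sp ?s ?xv" by (simp add: GGinv)
    also have "\<dots> = - (\<Sum>k\<in>{0..<l}. S l k * xi n1 w1 k x)"
      by (simp add: scalar_prod_def sum_negf)
    finally have e: "sp (Matrix.vec l (\<lambda>j. g l j)) (mv (minv (trunc g l)) ?xv) = - (\<Sum>k\<in>{0..<l}. S l k * xi n1 w1 k x)" .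
    have "Q l x = (\<Sum>k<Suc l. S l k * xi n1 w1 k x)" by (simp add: Q_def lessThan_Suc_atMost)
    also have "\<dots> = (\<Sum>k\<in>{0..<l}. S l k * xi n1 w1 k x) + xi n1 w1 l x" by (simp add: S_unit atLeast0LessThan)
    finally show ?thesis using e by simp
  qed
  have detU': "det (U n) = prod_list (map (\<lambda>i. Sb i i) [0..<n])" for n
  proof -
    have "det (U n) = prod_list (diag_mat (U n))"
      by (rule det_upper_triangular[OF _ cU]) (auto simp: U_def Sb_upper upper_triangular_def)
    also have "diag_mat (U n) = map (\<lambda>i. Sb i i) [0..<n]" by (auto simp: diag_mat_def U_def)
    finally show ?thesis .
  qed
  have Q3: "Q l x = det (mat (l+1) (l+1) (\<lambda>(i,j). if j < l then g i j else xi n1 w1 i x)) / det (trunc g l)" for l x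
  proof -
    let ?n = "l+1"
    let ?A = "mat (l+1) (l+1) (\<lambda>(i,j). if j < l then g i j else xi n1 w1 i x)"
    let ?B = "mat ?n ?n (\<lambda>(i,j). if j < l then Sb i j else Q i x)"
    have cA: "?A \<in> carrier_mat ?n ?n" by simp
    have LA: "L ?n * ?A = ?B"
    proof (rule eq_matI)
      fix i j assume ij: "i < dim_row ?B" "j < dim_col ?B"
      show "(L ?n * ?A) $$ (i, j) = ?B $$ (i, j)"
      proof (cases "j < l")
        case True thus ?thesis using ij LGe[of i ?n j] by (simp add: L_def scalar_prod_def)
      next
        case False thus ?thesis using ij LXe[of i ?n x] by (simp add: L_def scalar_prod_def)
      qed
    qed (auto simp: L_def)
    have "det ?B = prod_list (diag_mat ?B)"
      by (rule det_upper_triangular) (auto simp: Sb_upper upper_triangular_def)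
    also have "diag_mat ?B = map (\<lambda>i. Sb i i) [0..<l] @ [Q l x]"
      by (auto simp: diag_mat_def)
    finally have dB: "det ?B = prod_list (map (\<lambda>i. Sb i i) [0..<l]) * Q l x" by simp
    have "det ?B = det ?A" using det_mult[OF cL cA] LA detL by simp
    moreover have "det (trunc g l) = prod_list (map (\<lambda>i. Sb i i) [0..<l])"
      using detG[of l] detU'[of l] by (simp add: G_def)
    moreover have "det (trunc g l) \<noteq> 0" using detG[of l] detU[of l] by (simp add: G_def)
    ultimately show ?thesis using dB by simp
  qed
  have Le: "mv (L (l+1)) (unit_vec (l+1) l) = unit_vec (l+1) l" for l
    by (rule eq_vecI) (auto simp: L_def S_unit S_lower)
  have Ve: "mv (V (l+1)) (unit_vec (l+1) l) = Matrix.vec (l+1) (\<lambda>k. Sbinv k l)" for l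
    by (rule eq_vecI) (auto simp: V_def)
  have Ginve: "mv (minv (trunc g (l+1))) (unit_vec (l+1) l) = Matrix.vec (l+1) (\<lambda>k. Sbinv k l)" for l
    using Ginv assoc_mult_mat_vec[OF cV cL, of "unit_vec (l+1) l"] Le Ve by simp
  have Qb5: "Qb l x = sp (Matrix.vec (l+1) (\<lambda>i. xi n2 w2 i x)) (mv (minv (trunc g (l+1))) (unit_vec (l+1) l))" for l x
    unfolding Ginve by (simp add: scalar_prod_def Qb_def atLeast0LessThan lessThan_Suc_atMost mult.commute)
  have Qb4: "Qb l x = inverse (Sb l l) * (xi n2 w2 l x
                    - sp (Matrix.vec l (\<lambda>i. xi n2 w2 i x)) (mv (minv (trunc g l)) (Matrix.vec l (\<lambda>i. g i l))))" for l x
  proof -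
    let ?v = "Matrix.vec (l+1) (\<lambda>k. Sbinv k l)"
    let ?w = "Matrix.vec l (\<lambda>k. - Sbinv k l * Sb l l)"
    let ?T = "(\<Sum>k\<in>{0..<l}. Sbinv k l * xi n2 w2 k x)"
    have Gv: "mv (G (l+1)) ?v = unit_vec (l+1) l"
      using GGinv[of "unit_vec (l+1) l" "l+1"] Ginve[of l] by simp
    have gcole: "(\<Sum>k\<in>{0..<l}. g i k * Sbinv k l) = - g i l * Sbinv l l" if "i < l" for i
    proof -
      have "(mv (G (l+1)) ?v) $ i = 0" using Gv that by simp
      hence "(\<Sum>k\<in>{0..<Suc l}. g i k * Sbinv k l) = 0" using that by (simp add: G_def trunc_def scalar_prod_def)
      thus ?thesis by simp
    qed
    have Gw: "mv (G l) ?w = Matrix.vec l (\<lambda>i. g i l)"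
    proof (rule eq_vecI)
      fix i assume i: "i < dim_vec (Matrix.vec l (\<lambda>i. g i l))"
      hence il: "i < l" by simp
      have "(mv (G l) ?w) $ i = (\<Sum>k\<in>{0..<l}. g i k * (- Sbinv k l * Sb l l))"
        using il by (simp add: G_def trunc_def scalar_prod_def)
      also have "\<dots> = (- Sb l l) * (\<Sum>k\<in>{0..<l}. g i k * Sbinv k l)"
        by (simp add: sum_distrib_left algebra_simps)
      also have "\<dots> = g i l * (Sb l l * Sbinv l l)" using gcole[OF il] by simp
      also have "\<dots> = g i l" using SbSbinv[of l] by simp
      finally show "(mv (G l) ?w) $ i = Matrix.vec l (\<lambda>i. g i l) $ i" using il by simp
    qed (simp add: G_def trunc_def)
    have "sp (Matrix.vec l (\<lambda>i. xi n2 w2 i x)) (mv (minv (trunc g l)) (Matrix.vec l (\<lambda>i. g i l)))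
        = sp (Matrix.vec l (\<lambda>i. xi n2 w2 i x)) ?w"
      unfolding Gw[symmetric] by (subst GinvG) auto
    also have "\<dots> = (\<Sum>k\<in>{0..<l}. xi n2 w2 k x * (- Sbinv k l * Sb l l))" by (simp add: scalar_prod_def)
    also have "\<dots> = (- Sb l l) * ?T" by (simp add: sum_distrib_left algebra_simps)
    finally have e: "sp (Matrix.vec l (\<lambda>i. xi n2 w2 i x)) (mv (minv (trunc g l)) (Matrix.vec l (\<lambda>i. g i l))) = - Sb l l * ?T" by simp
    have "Qb l x = (\<Sum>k<Suc l. Sbinv k l * xi n2 w2 k x)" by (simp add: Qb_def lessThan_Suc_atMost)
    also have "\<dots> = ?T + Sbinv l l * xi n2 w2 l x" by (simp add: atLeast0LessThan)
    finally have q: "Qb l x = ?T + Sbinv l l * xi n2 w2 l x" .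
    have sinv: "Sbinv l l = inverse (Sb l l)" using SbSbinv[of l] Sb_diag[of l] by (simp add: field_simps)
    show ?thesis unfolding e q sinv using Sb_diag[of l] by (simp add: field_simps)
  qed
  have Qb6: "Qb l x = det (mat (l+1) (l+1) (\<lambda>(i,j). if i < l then g i j else xi n2 w2 j x)) / det (trunc g (l+1))" for l x
  proof -
    let ?n = "l+1"
    let ?L = "mat ?n ?n (\<lambda>(i,j). if i < l then S i j else if i = j then 1 else (0::real))"
    let ?B = "mat ?n ?n (\<lambda>(i,j). if i < l then g i j else xi n2 w2 j x)"
    let ?C = "mat ?n ?n (\<lambda>(i,j). if i < l then Sb i j else xi n2 w2 j x)"
    let ?D = "mat ?n ?n (\<lambda>(i,j). if i < l then (if i = j then 1 else 0) else (\<Sum>k\<in>{0..<?n}. xi n2 w2 k x * Sbinv k j))"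
    have cL': "?L \<in> carrier_mat ?n ?n" and cB: "?B \<in> carrier_mat ?n ?n" and cC: "?C \<in> carrier_mat ?n ?n" by auto
    have LB: "?L * ?B = ?C"
    proof (rule eq_matI)
      fix i j assume ij: "i < dim_row ?C" "j < dim_col ?C"
      show "(?L * ?B) $$ (i, j) = ?C $$ (i, j)"
      proof (cases "i < l")
        case True
        have "(?L * ?B) $$ (i, j) = (\<Sum>k\<in>{0..<?n}. S i k * (if k < l then g k j else xi n2 w2 j x))"
          using ij True by (simp add: scalar_prod_def)
        also have "\<dots> = (\<Sum>k\<le>i. S i k * (if k < l then g k j else xi n2 w2 j x))"
          by (rule sum_trunc) (use ij S_lower in auto)
        also have "\<dots> = (\<Sum>k\<le>i. S i k * g k j)" by (rule sum.cong) (use True in auto)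
        also have "\<dots> = Sb i j" by (rule LU)
        finally show ?thesis using ij True by simp
      next
        case False
        hence il: "i = l" using ij by simp
        have "(?L * ?B) $$ (i, j) = (\<Sum>k\<in>{0..<Suc l}. (if l = k then 1 else 0) * (if k < l then g k j else xi n2 w2 j x))"
          using ij il by (simp add: scalar_prod_def)
        also have "\<dots> = xi n2 w2 j x" by simp
        finally show ?thesis using ij il by simp
      qed
    qed auto
    have CV: "?C * V ?n = ?D"
    proof (rule eq_matI)
      fix i j assume ij: "i < dim_row ?D" "j < dim_col ?D"
      show "(?C * V ?n) $$ (i, j) = ?D $$ (i, j)"
      proof (cases "i < l")
        case True thus ?thesis using ij UVe[of j ?n i] by (simp add: V_def scalar_prod_def)
      next
        case False thus ?thesis using ij by (simp add: V_def scalar_prod_def)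
      qed
    qed (auto simp: V_def)
    have "det ?L = prod_list (diag_mat ?L)"
      by (rule det_lower_triangular[OF _ cL']) (auto simp: S_lower)
    also have "diag_mat ?L = map (\<lambda>_. 1) [0..<?n]" by (auto simp: diag_mat_def S_unit)
    finally have dL: "det ?L = 1" by (simp add: prod_list_ones)
    have "det ?D = prod_list (diag_mat ?D)"
      by (rule det_lower_triangular[where n="l+1"]) auto
    also have "diag_mat ?D = map (\<lambda>_. 1) [0..<l] @ [\<Sum>k\<in>{0..<?n}. xi n2 w2 k x * Sbinv k l]"
      by (auto simp: diag_mat_def)
    also have "(\<Sum>k\<in>{0..<?n}. xi n2 w2 k x * Sbinv k l) = Qb l x"
      by (simp add: Qb_def atLeast0LessThan lessThan_Suc_atMost mult.commute)
    finally have dD: "det ?D = Qb l x" by (simp add: prod_list_ones)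
    have "det ?D = det ?L * det ?B * det (V ?n)"
      using det_mult[OF cC cV] det_mult[OF cL' cB] LB CV by simp
    hence e1: "det ?B * det (V ?n) = Qb l x" using dL dD by simp
    have e2: "det (V ?n) * det (U ?n) = 1" using det_mult[OF cV cU, of ?n] VU by simp
    have "det ?B = det ?B * (det (V ?n) * det (U ?n))" using e2 by simp
    also have "\<dots> = Qb l x * det (U ?n)" using e1 by (simp add: algebra_simps)
    finally have "det ?B = Qb l x * det (trunc g ?n)" using detG[of ?n] by (simp add: G_def)
    thus ?thesis using detG[of ?n] detU[of ?n] by (simp add: G_def)
  qed
  show ?thesis using Q1 Q2 Q3 Qb4 Qb5 Qb6 by blast
qed

end
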